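(* Let $m\ge3$ be odd, $s$ a positive integer, $n=sm$, and $\Gamma=C_n[mK_1]$. For $i\in\{2,\dots,n\}$ let $\ell_i=1+\frac{(i-2)(i-1)}{2}$, and define $$\sigma_1=(c,1,1,\dots,1)r,\qquad \sigma_2=(t,tc^{\ell_2},tc^{\ell_3},\dots,tc^{\ell_n})z,\qquad G=\langle\sigma_1,\sigma_2\rangle.$$ Then $\sigma_1$ has order $mn$, $\sigma_2$ has order $2m$, $\sigma_1\sigma_2$ has order $2$, and $|G|=2m^2n$.
   Context: $C_n[mK_1]$ is the graph with vertex set $\{1,\dots,n\}\times\{1,\dots,m\}$ in which $(i_1,j_1)$ is adjacent to $(i_2,j_2)$ if and only if $i_1\equiv i_2\pm1\pmod n$ (residues mod $n$ taken in $\{1,\dots,n\}$). Permutations act on the right ($x\alpha$ is the image of $x$) and products are composed left to right, both in $S_m$ and in $\mathrm{Aut}(\Gamma)$. For $\alpha_1,\dots,\alpha_n\in S_m$ and a permutation $x$ of $\{1,\dots,n\}$ in the dihedral group $D_n=\langle r,z\rangle$, $(\alpha_1,\dots,\alpha_n)x$ denotes the automorphism of $\Gamma$ mapping $(i,j)\mapsto(ix,\,j\alpha_i)$; $1$ denotes an identity permutation. Here $c=(1\,2\,\cdots\,m)\in S_m$; $t\in S_m$ fixes $1$ and maps $j\mapsto m-j+2$ for $2\le j\le m$; $r$ is the permutation $i\mapsto i+1 \pmod n$ of $\{1,\dots,n\}$; and $z$ fixes $1$ and maps $j\mapsto n-j+2$ for $2\le j\le n$. *)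

theory Defs
  imports "HOL-Algebra.Algebra"
begin

definition verts :: "nat \<Rightarrow> nat \<Rightarrow> (nat \<times> nat) set" where
  "verts n m = {1..n} \<times> {1..m}"

definition cyc_succ :: "nat \<Rightarrow> nat \<Rightarrow> nat" where
  "cyc_succ n i = i mod n + 1"

definition adj :: "nat \<Rightarrow> nat \<Rightarrow> nat \<times> nat \<Rightarrow> nat \<times> nat \<Rightarrow> bool" where
  "adj n m u v \<longleftrightarrow> u \<in> verts n m \<and> v \<in> verts n m \<and>
     (fst u = cyc_succ n (fst v) \<or> fst v = cyc_succ n (fst u))"

text \<open>Automorphism group Aut(C_n[mK_1]) as a subgroup of the symmetric group on the
  vertex set (product = function composition, compose S g f = g \<circ> f on S).\<close>
definition Aut :: "nat \<Rightarrow> nat \<Rightarrow> (nat \<times> nat \<Rightarrow> nat \<times> nat) monoid" where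
  "Aut n m = (BijGroup (verts n m))\<lparr> carrier :=
     {f \<in> Bij (verts n m). \<forall>u\<in>verts n m. \<forall>v\<in>verts n m. adj n m u v \<longleftrightarrow> adj n m (f u) (f v)} \<rparr>"

text \<open>The automorphism (alpha_1,...,alpha_n)x : (i,j) maps to (ix, j alpha_i),
  given as an extensional function on the vertex set.\<close>
definition wr :: "nat \<Rightarrow> nat \<Rightarrow> (nat \<Rightarrow> nat \<Rightarrow> nat) \<Rightarrow> (nat \<Rightarrow> nat) \<Rightarrow> nat \<times> nat \<Rightarrow> nat \<times> nat" where
  "wr n m \<alpha> x = restrict (\<lambda>(i, j). (x i, \<alpha> i j)) (verts n m)"

text \<open>c = (1 2 ... m) and its powers: c^k maps j to ((j - 1 + k) mod m) + 1.\<close>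
definition cpow :: "nat \<Rightarrow> nat \<Rightarrow> nat \<Rightarrow> nat" where
  "cpow m k j = (j - 1 + k) mod m + 1"

text \<open>t fixes 1 and maps j to m - j + 2 for 2 \<le> j \<le> m (same formula gives z on {1..n}).\<close>
definition refl_perm :: "nat \<Rightarrow> nat \<Rightarrow> nat" where
  "refl_perm m j = (if j = 1 then 1 else m + 2 - j)"

definition ell :: "nat \<Rightarrow> nat" where
  "ell i = 1 + (i - 2) * (i - 1) div 2"

definition sigma1 :: "nat \<Rightarrow> nat \<Rightarrow> nat \<times> nat \<Rightarrow> nat \<times> nat" where
  "sigma1 n m = wr n m (\<lambda>i j. if i = 1 then cpow m 1 j else j) (cyc_succ n)"

text \<open>sigma_2 = (t, t c^ell_2, ..., t c^ell_n) z. Products are left to right,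
  so j (t c^l) = (j t) c^l.\<close>
definition sigma2 :: "nat \<Rightarrow> nat \<Rightarrow> nat \<times> nat \<Rightarrow> nat \<times> nat" where
  "sigma2 n m = wr n m (\<lambda>i j. if i = 1 then refl_perm m j else cpow m (ell i) (refl_perm m j))
                       (refl_perm n)"

end

theory Submission
  imports Defs
begin


definition dec :: "nat \<Rightarrow> nat \<Rightarrow> int \<Rightarrow> nat \<times> nat" where
  "dec n m x = (nat (x mod int n) + 1, nat (((x + int n - 1) div int n) mod int m) + 1)"
definition enc :: "nat \<Rightarrow> nat \<times> nat \<Rightarrow> int" where
  "enc n v = int (fst v) - 1 + int n * (int (snd v) - 1) - (if fst v = 1 then 0 else int n)"
definition Mf :: "nat \<Rightarrow> nat \<Rightarrow> (int \<Rightarrow> int) \<Rightarrow> nat \<times> nat \<Rightarrow> nat \<times> nat" where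
  "Mf n m f = restrict (\<lambda>v. dec n m (f (enc n v))) (verts n m)"

lemma Aut_subgroup:
  "subgroup {f \<in> Bij (verts n m). \<forall>u\<in>verts n m. \<forall>v\<in>verts n m. adj n m u v \<longleftrightarrow> adj n m (f u) (f v)}
            (BijGroup (verts n m))"
  (is "subgroup ?H _")
proof (rule subgroup.intro)
  show "?H \<subseteq> carrier (BijGroup (verts n m))" by (auto simp: BijGroup_def)
next
  fix x y assume x: "x \<in> ?H" and y: "y \<in> ?H"
  have yS: "y u \<in> verts n m" if "u \<in> verts n m" for u
    using y that Bij_imp_funcset by blast
  have "x \<otimes>\<^bsub>BijGroup (verts n m)\<^esub> y = compose (verts n m) x y"
    using x y by (simp add: BijGroup_def)
  moreover have "compose (verts n m) x y \<in> ?H"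
  proof -
    have "adj n m u v \<longleftrightarrow> adj n m (compose (verts n m) x y u) (compose (verts n m) x y v)"
      if "u \<in> verts n m" "v \<in> verts n m" for u v
    proof -
      have "adj n m u v \<longleftrightarrow> adj n m (y u) (y v)" using y that by auto
      also have "\<dots> \<longleftrightarrow> adj n m (x (y u)) (x (y v))" using x yS that by auto
      finally show ?thesis using that by (simp add: compose_def)
    qed
    then show ?thesis using x y by (auto simp: compose_Bij)
  qed
  ultimately show "x \<otimes>\<^bsub>BijGroup (verts n m)\<^esub> y \<in> ?H" by simp
next
  show "\<one>\<^bsub>BijGroup (verts n m)\<^esub> \<in> ?H" by (simp add: BijGroup_def id_Bij)
next
  fix x assume x: "x \<in> ?H"
  then have xB: "x \<in> Bij (verts n m)" by simp
  have inv: "inv\<^bsub>BijGroup (verts n m)\<^esub> x = (\<lambda>u \<in> verts n m. inv_into (verts n m) x u)"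
    using inv_BijGroup[OF xB] .
  have bb: "bij_betw x (verts n m) (verts n m)" using xB by (simp add: Bij_def)
  have fi: "x (inv_into (verts n m) x u) = u" if "u \<in> verts n m" for u
    using bb that by (simp add: bij_betw_def f_inv_into_f)
  have im: "inv_into (verts n m) x u \<in> verts n m" if "u \<in> verts n m" for u
    using Bij_inv_into_mem[OF xB that] .
  have "(\<lambda>u \<in> verts n m. inv_into (verts n m) x u) \<in> ?H"
  proof -
    have "adj n m u v \<longleftrightarrow> adj n m (inv_into (verts n m) x u) (inv_into (verts n m) x v)"
      if "u \<in> verts n m" "v \<in> verts n m" for u v
      using x im[OF that(1)] im[OF that(2)] fi[OF that(1)] fi[OF that(2)] by auto
    then show ?thesis using restrict_inv_into_Bij[OF xB] im by auto
  qed
  then show "inv\<^bsub>BijGroup (verts n m)\<^esub> x \<in> ?H" using inv by simp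
qed

lemma Aut_group: "group (Aut n m)"
  unfolding Aut_def by (rule subgroup.subgroup_is_group[OF Aut_subgroup group_BijGroup])

lemma Aut_mult: "f \<in> carrier (Aut n m) \<Longrightarrow> g \<in> carrier (Aut n m) \<Longrightarrow>
   f \<otimes>\<^bsub>Aut n m\<^esub> g = compose (verts n m) f g"
  by (simp add: Aut_def BijGroup_def)

lemma Aut_one: "\<one>\<^bsub>Aut n m\<^esub> = (\<lambda>x \<in> verts n m. x)"
  by (simp add: Aut_def BijGroup_def)

lemma Aut_carrier: "carrier (Aut n m) = {f \<in> Bij (verts n m). \<forall>u\<in>verts n m. \<forall>v\<in>verts n m. adj n m u v \<longleftrightarrow> adj n m (f u) (f v)}"
  by (simp add: Aut_def BijGroup_def)

lemma alg1: "(n::int) = s*m \<Longrightarrow> m*n dvd ((- (k*n) + n*w*(k*n)*(k*n - 1)) - (0 + (-k) * n))"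
  unfolding dvd_def by (rule exI[of _ "s*w*k*(k*n-1)"]) Groebner_Basis.algebra
lemma alg2: "(n::int) = s*m \<Longrightarrow> m*n dvd ((-(p + (k-1)*n) + n*w*(p+(k-1)*n)*(p+(k-1)*n - 1)) - ((n - p) + (-k + w*p*(p-1)) * n))"
  unfolding dvd_def by (rule exI[of _ "s*w*(k-1)*(2*p + (k-1)*n - 1)"]) Groebner_Basis.algebra
lemma alg3a: "2*(T::int) = (p-1)*p \<Longrightarrow> 2*w = m+1 \<Longrightarrow> m dvd (((m - k) + (1 + T)) - (-k + w*p*(p-1) + 1))"
  unfolding dvd_def by (rule exI[of _ "1 - T"]) Groebner_Basis.algebra
lemma alg3b: "2*(T::int) = (p-1)*p \<Longrightarrow> 2*w = m+1 \<Longrightarrow> m dvd (((0 - k) + (1 + T)) - (-k + w*p*(p-1) + 1))"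
  unfolding dvd_def by (rule exI[of _ "- T"]) Groebner_Basis.algebra

locale cn =
  fixes m s n :: nat
  assumes m3: "m \<ge> 3" and oddm: "odd m" and spos: "s > 0" and ndef: "n = s * m"
begin

abbreviation "S \<equiv> verts n m"
abbreviation "NN \<equiv> int m * int n"

lemma n3: "n \<ge> 3" using m3 spos ndef
  by (metis dual_order.trans le_add1 less_imp_Suc_add mult_Suc mult_le_mono1 nat_mult_1)

lemma dec_in: "dec n m x \<in> S"
proof -
  have "x mod int n < int n" "0 \<le> x mod int n" using n3 by auto
  moreover have "((x + int n - 1) div int n) mod int m < int m" "0 \<le> ((x + int n - 1) div int n) mod int m" using m3 by auto
  ultimately show ?thesis unfolding dec_def verts_def by auto
qed

lemma dec_enc: assumes "v \<in> S" shows "dec n m (enc n v) = v"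
proof -
  obtain i j where v: "v = (i,j)" "1 \<le> i" "i \<le> n" "1 \<le> j" "j \<le> m" using assms unfolding verts_def by auto
  define p where "p = int i - 1"
  define k where "k = int j - 1"
  have p: "0 \<le> p" "p < int n" using v p_def by auto
  have k: "0 \<le> k" "k < int m" using v k_def by auto
  have e: "enc n v = p + int n * (k - (if i = 1 then 0 else 1))"
    unfolding enc_def v p_def k_def by (auto simp: algebra_simps)
  have e1: "enc n v mod int n = p" using p unfolding e by simp
  have "(enc n v + int n - 1) div int n = (p + int n - 1) div int n + (k - (if i = 1 then 0 else 1))"
  proof -
    have "enc n v + int n - 1 = (p + int n - 1) + (k - (if i = 1 then 0 else 1)) * int n"
      unfolding e by (simp add: algebra_simps)
    moreover have "((p + int n - 1) + K * int n) div int n = (p + int n - 1) div int n + K" for K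
      using n3 by simp
    ultimately show ?thesis by presburger
  qed
  also have "(p + int n - 1) div int n = (if i = 1 then 0 else 1)"
  proof (cases "i = 1")
    case True then show ?thesis using p p_def n3 by (simp add: div_pos_neg_trivial)
  next
    case False
    then have "int n \<le> p + int n - 1" "p + int n - 1 < 2 * int n" using p p_def v by auto
    then show ?thesis using False
    proof -
      have "(p + int n - 1) div int n = 1"
        using \<open>int n \<le> p + int n - 1\<close> \<open>p + int n - 1 < 2 * int n\<close>
        using div_pos_geq[of "int n" "p + int n - 1"] n3 by (simp add: div_pos_pos_trivial)
      then show ?thesis using False by simp
    qed
  qed
  finally have e2: "(enc n v + int n - 1) div int n = k" by simp
  show ?thesis unfolding dec_def e1 e2 using p k v p_def k_def by auto
qed

lemma div_aux: "(p + int n - 1) div int n = (if p = 0 then 0 else 1)" if "0 \<le> p" "p < int n"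
proof (cases "p = 0")
  case True then show ?thesis using n3 by (simp add: div_pos_neg_trivial)
next
  case False
  then have "int n \<le> p + int n - 1" "p + int n - 1 < 2 * int n" using that by auto
  then show ?thesis using False div_pos_geq[of "int n" "p + int n - 1"] n3 by (simp add: div_pos_pos_trivial)
qed

lemma enc_dec: "NN dvd (enc n (dec n m x) - x)"
proof -
  define p where "p = x mod int n"
  define q where "q = x div int n"
  have p: "0 \<le> p" "p < int n" using n3 p_def by auto
  have x: "x = p + q * int n" unfolding p_def q_def by simp
  define c where "c = q + (if p = 0 then 0 else 1)"
  have "(x + int n - 1) div int n = ((p + int n - 1) + q * int n) div int n"
    unfolding x by (simp add: algebra_simps)
  also have "\<dots> = (p + int n - 1) div int n + q" using n3 by simp
  finally have c: "(x + int n - 1) div int n = c" unfolding c_def using div_aux[OF p] by simp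
  have f: "(nat p + 1 = 1) = (p = 0)" using p by auto
  have k0: "0 \<le> c mod int m" using m3 by simp
  define E where "E = enc n (dec n m x)"
  have "E = p + int n * (c mod int m) - (if p = 0 then 0 else int n)"
    unfolding E_def enc_def dec_def c p_def[symmetric] using f p k0 by simp
  then have "E - x = int n * (c mod int m - c)"
    unfolding x c_def by (cases "p = 0") (simp_all add: algebra_simps)
  then have "enc n (dec n m x) - x = int n * (c mod int m - c)" unfolding E_def .
  moreover have "int m dvd (c mod int m - c)" 
  proof -
    have "c mod int m - c = int m * (- (c div int m))" using div_mult_mod_eq[of c "int m"] by (simp add: algebra_simps)
    then show ?thesis by simp
  qed
  ultimately show ?thesis by (simp add: mult.commute)
qed

lemma dec_cong: assumes "NN dvd (x - y)" shows "dec n m x = dec n m y"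
proof -
  obtain t where t: "x = y + NN * t" using assms unfolding dvd_def by (metis add.commute diff_add_cancel)
  have 1: "x mod int n = y mod int n" unfolding t
  proof -
    have "y + NN * t = y + (int m * t) * int n" by (simp add: algebra_simps)
    then show "(y + NN * t) mod int n = y mod int n" by (simp only: mod_mult_self1)
  qed
  have "(x + int n - 1) div int n = ((y + int n - 1) + (int m * t) * int n) div int n"
    unfolding t by (simp add: algebra_simps)
  also have "\<dots> = (y + int n - 1) div int n + int m * t" using n3 by simp
  finally have "((x + int n - 1) div int n) mod int m = ((y + int n - 1) div int n) mod int m"
    by simp
  then show ?thesis unfolding dec_def 1 by simp
qed

lemma dec_eq_iff: "dec n m x = dec n m y \<longleftrightarrow> NN dvd (x - y)"
proof
  assume "dec n m x = dec n m y"
  then have "NN dvd (enc n (dec n m y) - x)" using enc_dec[of x] by simp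
  then show "NN dvd (x - y)" using enc_dec[of y] dvd_diff[of NN "enc n (dec n m y) - y" "enc n (dec n m y) - x"] by simp
qed (rule dec_cong)

definition "cpt f \<longleftrightarrow> (\<forall>x y. NN dvd (x - y) \<longrightarrow> NN dvd (f x - f y))"

lemma Mf_apply: "v \<in> S \<Longrightarrow> Mf n m f v = dec n m (f (enc n v))"
  by (simp add: Mf_def)

lemma Mf_in: "v \<in> S \<Longrightarrow> Mf n m f v \<in> S"
  by (simp add: Mf_def dec_in)

lemma Mf_comp: assumes "cpt f" "v \<in> S" shows "Mf n m f (Mf n m g v) = Mf n m (f \<circ> g) v"
proof -
  have "NN dvd (f (enc n (dec n m (g (enc n v)))) - f (g (enc n v)))"
    using assms(1) enc_dec unfolding cpt_def by blast
  then show ?thesis using assms(2) dec_in by (simp add: Mf_apply dec_cong)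
qed

lemma Mf_cong: assumes "\<And>x. NN dvd (f x - g x)" shows "Mf n m f = Mf n m g"
  unfolding Mf_def using assms dec_cong by auto

lemma Mf_id: "Mf n m (\<lambda>x. x) = (\<lambda>x \<in> S. x)"
  unfolding Mf_def using dec_enc by auto

lemma Mf_ext: "Mf n m f \<in> extensional S" by (simp add: Mf_def)

lemma Mf_eq_id: assumes "Mf n m f = Mf n m (\<lambda>x. x)" "cpt f" shows "NN dvd (f x - x)"
proof -
  have "Mf n m f (dec n m x) = dec n m (f x)"
    using assms(2) enc_dec[of x] dec_in unfolding cpt_def by (auto simp: Mf_apply intro: dec_cong)
  moreover have "Mf n m (\<lambda>x. x) (dec n m x) = dec n m x" using dec_in Mf_id by simp
  ultimately have "NN dvd (x - f x)" using assms(1) dec_eq_iff by simp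
  then show ?thesis by (metis dvd_minus_iff minus_diff_eq)
qed

lemma Mf_bij: assumes "cpt g" "\<And>x. NN dvd (g (f x) - x)" shows "Mf n m f \<in> Bij S"
proof -
  have "Mf n m g (Mf n m f v) = v" if "v \<in> S" for v
    using Mf_comp[OF assms(1) that] Mf_cong[of "g \<circ> f" "\<lambda>x. x"] assms(2) Mf_id that by simp
  then have inj: "inj_on (Mf n m f) S" by (metis inj_onI)
  have sub: "Mf n m f ` S \<subseteq> S" using Mf_in by auto
  have fin: "finite S" unfolding verts_def by simp
  have "Mf n m f ` S = S" using endo_inj_surj[OF fin sub inj] .
  then show ?thesis using inj Mf_ext unfolding Bij_def bij_betw_def by auto
qed

lemma dec_rep: assumes "0 \<le> r" "r < int n"
  shows "dec n m (r + q * int n) = (nat r + 1, nat ((q + (if r = 0 then 0 else 1)) mod int m) + 1)"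
proof -
  have 1: "(r + q * int n) mod int n = r" using assms by simp
  have "(r + q * int n + int n - 1) div int n = ((r + int n - 1) + q * int n) div int n"
    by (simp add: algebra_simps)
  also have "\<dots> = (r + int n - 1) div int n + q" using n3 by simp
  finally have 2: "(r + q * int n + int n - 1) div int n = q + (if r = 0 then 0 else 1)"
    using div_aux[OF assms] by simp
  show ?thesis unfolding dec_def 1 2 by simp
qed

abbreviation "ww \<equiv> int ((m + 1) div 2)"
lemma ww2: "2 * ww = int m + 1" using oddm by (metis odd_two_times_div_two_succ even_Suc of_nat_1 of_nat_add of_nat_mult dvd_mult_div_cancel odd_even_add odd_one of_nat_numeral Suc_eq_plus1)

lemma nsm: "int n = int s * int m" using ndef by simp

definition f2 :: "int \<Rightarrow> int" where "f2 x = - x + int n * ww * x * (x - 1)"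

lemma sig1_eq: "sigma1 n m = Mf n m (\<lambda>x. x + 1)"
proof (rule ext)
  fix v
  show "sigma1 n m v = Mf n m (\<lambda>x. x + 1) v"
  proof (cases "v \<in> S")
    case False then show ?thesis by (simp add: sigma1_def wr_def Mf_def)
  next
    case True
    then obtain i j where v: "v = (i,j)" "1 \<le> i" "i \<le> n" "1 \<le> j" "j \<le> m" unfolding verts_def by auto
    have lhs: "sigma1 n m v = (i mod n + 1, if i = 1 then (j - 1 + 1) mod m + 1 else j)"
      using True v by (simp add: sigma1_def wr_def cyc_succ_def cpow_def)
    have rhs: "Mf n m (\<lambda>x. x + 1) v = dec n m (enc n (i,j) + 1)" using True v by (simp add: Mf_apply)
    consider "i = 1" | "2 \<le> i" "i < n" | "i = n" using v n3 by linarith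
    then show ?thesis
    proof cases
      case 1
      have e: "enc n (i,j) + 1 = 1 + (int j - 1) * int n" using 1 by (simp add: enc_def algebra_simps)
      have "dec n m (enc n (i,j) + 1) = (2, nat (int j mod int m) + 1)"
        unfolding e using dec_rep[of 1 "int j - 1"] n3 by simp
      then show ?thesis unfolding lhs rhs using 1 n3 v by (simp add: nat_mod_as_int)
    next
      case 2
      have "enc n (i,j) + 1 = int i + (int j - 2) * int n" using 2 by (simp add: enc_def algebra_simps)
      then have "dec n m (enc n (i,j) + 1) = (i + 1, nat ((int j - 1) mod int m) + 1)"
        using dec_rep[of "int i" "int j - 2"] 2 by simp
      moreover have "(int j - 1) mod int m = int j - 1" using v by simp
      ultimately show ?thesis unfolding lhs rhs using 2 v by simp
    next
      case 3
      have "enc n (i,j) + 1 = 0 + (int j - 1) * int n" using 3 n3 by (simp add: enc_def algebra_simps)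
      then have "dec n m (enc n (i,j) + 1) = (1, nat ((int j - 1) mod int m) + 1)"
        using dec_rep[of 0 "int j - 1"] n3 by simp
      moreover have "(int j - 1) mod int m = int j - 1" using v by simp
      ultimately show ?thesis unfolding lhs rhs using 3 v n3 by simp
    qed
  qed
qed

end


context cn begin
lemma sig2_eq: "sigma2 n m = Mf n m f2"
proof (rule ext)
  fix v
  show "sigma2 n m v = Mf n m f2 v"
  proof (cases "v \<in> S")
    case False then show ?thesis by (simp add: sigma2_def wr_def Mf_def)
  next
    case True
    then obtain i j where v: "v = (i,j)" "1 \<le> i" "i \<le> n" "1 \<le> j" "j \<le> m" unfolding verts_def by auto
    have rhs: "Mf n m f2 v = dec n m (f2 (enc n (i,j)))" using True v by (simp add: Mf_apply)
    define k where "k = int j - 1"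
    have k: "0 \<le> k" "k < int m" using v k_def by auto
    show ?thesis
    proof (cases "i = 1")
      case 1: True
      have lhs: "sigma2 n m v = (1, refl_perm m j)"
        using True v 1 by (simp add: sigma2_def wr_def refl_perm_def)
      have e: "enc n (i,j) = k * int n" using 1 by (simp add: enc_def k_def algebra_simps)
      have "dec n m (f2 (enc n (i,j))) = dec n m (0 + (-k) * int n)"
        unfolding e f2_def by (rule dec_cong, rule alg1[OF nsm])
      also have "\<dots> = (1, nat ((-k) mod int m) + 1)" using dec_rep[of 0 "-k"] n3 by simp
      finally have d: "dec n m (f2 (enc n (i,j))) = (1, nat ((-k) mod int m) + 1)" .
      show ?thesis
      proof (cases "j = 1")
        case True then show ?thesis unfolding lhs rhs d using k_def by (simp add: refl_perm_def)
      next
        case False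
        then have kp: "0 < k" using k_def v by simp
        have "(-k) mod int m = int m - k"
          using zmod_zminus1_eq_if[of k "int m"] k kp by simp
        then show ?thesis unfolding lhs rhs d using False k_def v by (simp add: refl_perm_def)
      qed
    next
      case False
      define p where "p = int i - 1"
      have p: "0 < p" "p < int n" using v False p_def by auto
      have lhs: "sigma2 n m v = (n + 2 - i, (refl_perm m j - 1 + ell i) mod m + 1)"
        using True v False by (simp add: sigma2_def wr_def refl_perm_def cpow_def)
      have e: "enc n (i,j) = p + (k - 1) * int n" using False by (simp add: enc_def k_def p_def algebra_simps)
      have "dec n m (f2 (enc n (i,j))) = dec n m ((int n - p) + (-k + ww*p*(p-1)) * int n)"
        unfolding e f2_def by (rule dec_cong, rule alg2[OF nsm])
      also have "\<dots> = (nat (int n - p) + 1, nat ((-k + ww*p*(p-1) + 1) mod int m) + 1)"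
        using dec_rep[of "int n - p" "-k + ww*p*(p-1)"] p by simp
      finally have d: "dec n m (f2 (enc n (i,j))) = (nat (int n - p) + 1, nat ((-k + ww*p*(p-1) + 1) mod int m) + 1)" .
      define T where "T = (i - 2) * (i - 1) div 2"
      have ev: "even ((i - 2) * (i - 1))"
      proof (cases "even i")
        case True then have "even (i - 2)" using False v by auto
        then show ?thesis by simp
      next
        case False then have "even (i - 1)" using v by auto
        then show ?thesis by simp
      qed
      have T2: "2 * int T = (p - 1) * p"
      proof -
        have "2 * T = (i - 2) * (i - 1)" using ev unfolding T_def by simp
        then have "2 * int T = int ((i - 2) * (i - 1))" by linarith
        also have "\<dots> = (p - 1) * p" using False v p_def by (simp add: of_nat_diff)
        finally show ?thesis .
      qed
      have ell: "int (ell i) = 1 + int T" unfolding ell_def T_def by simp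
      define R where "R = int (refl_perm m j - 1)"
      have R: "R = int m - k \<or> R = 0 - k"
        unfolding R_def k_def refl_perm_def using v by (cases "j = 1") (auto simp: of_nat_diff)
      have Y: "int (refl_perm m j - 1 + ell i) = R + (1 + int T)" unfolding R_def using ell by simp
      have dv: "int m dvd (R + (1 + int T)) - (-k + ww*p*(p-1) + 1)"
        using R alg3a[OF T2 ww2] alg3b[OF T2 ww2] by auto
      have "int (refl_perm m j - 1 + ell i) mod int m = (-k + ww*p*(p-1) + 1) mod int m"
        unfolding Y using dv by (simp add: mod_eq_dvd_iff)
      then have 2: "nat ((-k + ww*p*(p-1) + 1) mod int m) = (refl_perm m j - 1 + ell i) mod m"
        by (metis nat_int of_nat_mod)
      have 1: "nat (int n - p) + 1 = n + 2 - i" using p_def v False by simp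
      show ?thesis unfolding lhs rhs d 1 2 ..
    qed
  qed
qed

end



lemma alg4: "(n::int) = s*m \<Longrightarrow> m*n dvd (((- x + n*w*x*(x-1)) + n*b*(- x + n*w*x*(x-1))) - (- x - n*b*x + n*w*x*(x-1)))"
  unfolding dvd_def by (rule exI[of _ "s*b*w*x*(x-1)"]) Groebner_Basis.algebra

lemma alg5: "(n::int) = s*m \<Longrightarrow> 2*w = m+1 \<Longrightarrow>
  m*n dvd ((- (- x + n*w*x*(x-1)) - n*b*(- x + n*w*x*(x-1)) + n*w*(- x + n*w*x*(x-1))*((- x + n*w*x*(x-1)) - 1)) - (x + n*(b+1)*x))"
  unfolding dvd_def by (rule exI[of _ "x + s*(-b*(w*x*(x-1)) + w*(-2*(w*x*(x-1))*x - (w*x*(x-1)) + n*(w*x*(x-1))*(w*x*(x-1))))"]) Groebner_Basis.algebra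

lemma alg6: "(n::int) = s*m \<Longrightarrow> 2*w = m+1 \<Longrightarrow>
  m*n dvd ((- (- x + n*w*x*(x-1)) + n * (- x + n*w*x*(x-1)) + n*w*(- x + n*w*x*(x-1))*((- x + n*w*x*(x-1)) - 1)) - x)"
  unfolding dvd_def by (rule exI[of _ "x + s*((w*x*(x-1)) - w*(w*x*(x-1))*(2*x+1) + n*w*(w*x*(x-1))*(w*x*(x-1)))"]) Groebner_Basis.algebra

context cn begin

lemma cpt_poly: "cpt (\<lambda>x. c0 + c1 * x + c2 * (x * (x - 1)))"
  unfolding cpt_def
proof (intro allI impI)
  fix x y :: int assume "NN dvd x - y"
  moreover have "(c0 + c1 * x + c2 * (x * (x - 1))) - (c0 + c1 * y + c2 * (y * (y - 1))) = (x - y) * (c1 + c2 * (x + y - 1))"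
    by (simp add: algebra_simps)
  ultimately show "NN dvd (c0 + c1 * x + c2 * (x * (x - 1))) - (c0 + c1 * y + c2 * (y * (y - 1)))"
    by simp
qed

lemma cpt_eq: "(\<And>x. f x = c0 + c1 * x + c2 * (x * (x - 1))) \<Longrightarrow> cpt f"
proof -
  assume "\<And>x. f x = c0 + c1 * x + c2 * (x * (x - 1))"
  then have "f = (\<lambda>x. c0 + c1 * x + c2 * (x * (x - 1)))" by auto
  then show ?thesis using cpt_poly by simp
qed

definition Ev :: "int \<Rightarrow> int \<Rightarrow> int" where "Ev b x = x + int n * b * x"
definition Od :: "int \<Rightarrow> int \<Rightarrow> int" where "Od b x = - x - int n * b * x + int n * ww * x * (x - 1)"

lemma cpt_shift: "cpt (\<lambda>x. x + a)" by (rule cpt_eq[of _ a 1 0]) simp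
lemma cpt_Ev: "cpt (Ev b)" by (rule cpt_eq[of _ 0 "1 + int n * b" 0]) (simp add: Ev_def algebra_simps)
lemma cpt_Od: "cpt (Od b)" by (rule cpt_eq[of _ 0 "- 1 - int n * b" "int n * ww"]) (simp add: Od_def algebra_simps)
lemma cpt_f2: "cpt f2" by (rule cpt_eq[of _ 0 "- 1" "int n * ww"]) (simp add: f2_def algebra_simps)

lemma Mf_dec: "cpt f \<Longrightarrow> Mf n m f (dec n m x) = dec n m (f x)"
  using enc_dec[of x] dec_in unfolding cpt_def by (auto simp: Mf_apply intro: dec_cong)

lemma cs_rel: "i \<in> {1..n} \<Longrightarrow> i' \<in> {1..n} \<Longrightarrow>
  (i = cyc_succ n i' \<or> i' = cyc_succ n i) \<longleftrightarrow> (cyc_succ n i = cyc_succ n (cyc_succ n i') \<or> cyc_succ n i' = cyc_succ n (cyc_succ n i))"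
proof -
  have cs: "cyc_succ n x = (if x = n then 1 else x + 1)" if "x \<in> {1..n}" for x
    using that by (auto simp: cyc_succ_def)
  assume a: "i \<in> {1..n}" "i' \<in> {1..n}"
  have "cyc_succ n i \<in> {1..n}" "cyc_succ n i' \<in> {1..n}" using a cs n3 by auto
  then show ?thesis using a n3 by (simp add: cs) (auto split: if_splits)
qed

lemma z_rel: "i \<in> {1..n} \<Longrightarrow> i' \<in> {1..n} \<Longrightarrow>
  (i = cyc_succ n i' \<or> i' = cyc_succ n i) \<longleftrightarrow> (refl_perm n i = cyc_succ n (refl_perm n i') \<or> refl_perm n i' = cyc_succ n (refl_perm n i))"
proof -
  have cs: "cyc_succ n x = (if x = n then 1 else x + 1)" if "x \<in> {1..n}" for x
    using that by (auto simp: cyc_succ_def)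
  assume a: "i \<in> {1..n}" "i' \<in> {1..n}"
  have "refl_perm n i \<in> {1..n}" "refl_perm n i' \<in> {1..n}" using a n3 by (auto simp: refl_perm_def)
  then show ?thesis using a n3 by (simp add: cs) (auto simp: refl_perm_def split: if_splits)
qed

lemma adj_pres:
  assumes "\<And>u. u \<in> S \<Longrightarrow> f u \<in> S \<and> fst (f u) = \<phi> (fst u)"
    and "\<And>i i'. i \<in> {1..n} \<Longrightarrow> i' \<in> {1..n} \<Longrightarrow>
      (i = cyc_succ n i' \<or> i' = cyc_succ n i) \<longleftrightarrow> (\<phi> i = cyc_succ n (\<phi> i') \<or> \<phi> i' = cyc_succ n (\<phi> i))"
  shows "\<forall>u\<in>S. \<forall>v\<in>S. adj n m u v \<longleftrightarrow> adj n m (f u) (f v)"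
proof (intro ballI)
  fix u v assume u: "u \<in> S" and v: "v \<in> S"
  have "fst u \<in> {1..n}" "fst v \<in> {1..n}" using u v by (auto simp: verts_def)
  then show "adj n m u v \<longleftrightarrow> adj n m (f u) (f v)"
    using assms(1)[OF u] assms(1)[OF v] assms(2)[of "fst u" "fst v"] u v by (auto simp: adj_def)
qed

lemma sig1_car: "sigma1 n m \<in> carrier (Aut n m)"
proof -
  have B: "sigma1 n m \<in> Bij S" unfolding sig1_eq
    by (rule Mf_bij[OF cpt_shift[of "-1"]]) simp
  have h: "\<And>u. u \<in> S \<Longrightarrow> sigma1 n m u \<in> S \<and> fst (sigma1 n m u) = cyc_succ n (fst u)"
    using Mf_in[of _ "\<lambda>x. x + 1"] by (auto simp: sig1_eq[symmetric] sigma1_def wr_def split_beta)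
  have "\<forall>u\<in>S. \<forall>v\<in>S. adj n m u v \<longleftrightarrow> adj n m (sigma1 n m u) (sigma1 n m v)"
    by (rule adj_pres[OF h cs_rel])
  then show ?thesis using B by (simp add: Aut_carrier)
qed

lemma sig2_car: "sigma2 n m \<in> carrier (Aut n m)"
proof -
  have c: "cpt (\<lambda>y. - y + int n * y + int n * ww * y * (y - 1))"
    by (rule cpt_eq[of _ 0 "- 1 + int n" "int n * ww"]) (simp add: algebra_simps)
  have B: "sigma2 n m \<in> Bij S" unfolding sig2_eq
    by (rule Mf_bij[OF c]) (unfold f2_def, rule alg6[OF nsm ww2])
  have h: "\<And>u. u \<in> S \<Longrightarrow> sigma2 n m u \<in> S \<and> fst (sigma2 n m u) = refl_perm n (fst u)"
    using Mf_in[of _ f2] by (auto simp: sig2_eq[symmetric] sigma2_def wr_def split_beta)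
  have "\<forall>u\<in>S. \<forall>v\<in>S. adj n m u v \<longleftrightarrow> adj n m (sigma2 n m u) (sigma2 n m v)"
    by (rule adj_pres[OF h z_rel])
  then show ?thesis using B by (simp add: Aut_carrier)
qed

lemma Mf_mult:
  assumes "Mf n m f \<in> carrier (Aut n m)" "Mf n m g \<in> carrier (Aut n m)" "cpt f"
  shows "Mf n m f \<otimes>\<^bsub>Aut n m\<^esub> Mf n m g = Mf n m (f \<circ> g)"
proof -
  have "compose S (Mf n m f) (Mf n m g) = Mf n m (f \<circ> g)"
  proof (rule ext)
    fix v show "compose S (Mf n m f) (Mf n m g) v = Mf n m (f \<circ> g) v"
      by (cases "v \<in> S") (simp_all add: compose_def Mf_comp[OF assms(3)], simp add: Mf_def)
  qed
  then show ?thesis using Aut_mult[OF assms(1,2)] by simp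
qed

end



context cn begin

abbreviation "AG \<equiv> Aut n m"
abbreviation "s1 \<equiv> sigma1 n m"
abbreviation "s2 \<equiv> sigma2 n m"

sublocale G: group AG by (rule Aut_group)

lemma one_Mf: "\<one>\<^bsub>AG\<^esub> = Mf n m (\<lambda>x. x)" by (simp add: Aut_one Mf_id)

lemma s1_pow: "s1 [^]\<^bsub>AG\<^esub> a = Mf n m (\<lambda>x. x + int a)"
proof (induction a)
  case 0 then show ?case by (simp add: one_Mf)
next
  case (Suc a)
  have c: "Mf n m (\<lambda>x. x + int a) \<in> carrier AG" using Suc sig1_car G.nat_pow_closed by metis
  have "s1 [^]\<^bsub>AG\<^esub> Suc a = Mf n m (\<lambda>x. x + int a) \<otimes>\<^bsub>AG\<^esub> Mf n m (\<lambda>x. x + 1)"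
    using Suc sig1_eq by simp
  also have "\<dots> = Mf n m ((\<lambda>x. x + int a) \<circ> (\<lambda>x. x + 1))"
    by (rule Mf_mult[OF c _ cpt_shift]) (use sig1_car sig1_eq in simp)
  also have "(\<lambda>x. x + int a) \<circ> (\<lambda>x::int. x + 1) = (\<lambda>x. x + int (Suc a))" by auto
  finally show ?case .
qed

lemma s2_pow: "s2 [^]\<^bsub>AG\<^esub> (2*b) = Mf n m (Ev (int b)) \<and> s2 [^]\<^bsub>AG\<^esub> (2*b+1) = Mf n m (Od (int b))"
proof (induction b)
  case 0
  have e: "Ev 0 = (\<lambda>x. x)" by (auto simp: Ev_def)
  have "s2 [^]\<^bsub>AG\<^esub> (1::nat) = s2" using sig2_car by simp
  moreover have "Od 0 = f2" by (auto simp: Od_def f2_def)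
  ultimately show ?case by (simp add: one_Mf e sig2_eq)
next
  case (Suc b)
  have odd: "s2 [^]\<^bsub>AG\<^esub> (2*b+1) = Mf n m (Od (int b))" using Suc.IH by (rule conjunct2)
  have c1: "Mf n m (Od (int b)) \<in> carrier AG" using odd sig2_car G.nat_pow_closed by metis
  have ev: "s2 [^]\<^bsub>AG\<^esub> (2*Suc b) = Mf n m (Ev (int (Suc b)))"
  proof -
    have "s2 [^]\<^bsub>AG\<^esub> (2*Suc b) = s2 [^]\<^bsub>AG\<^esub> (2*b+1) \<otimes>\<^bsub>AG\<^esub> s2" by simp
    also have "\<dots> = Mf n m (Od (int b) \<circ> f2)"
      unfolding odd unfolding sig2_eq by (rule Mf_mult[OF c1 _ cpt_Od]) (use sig2_car sig2_eq in simp)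
    also have "\<dots> = Mf n m (Ev (int (Suc b)))"
      proof (rule Mf_cong)
        fix x
        have sb: "int (Suc b) = int b + 1" by simp
        show "NN dvd (Od (int b) \<circ> f2) x - Ev (int (Suc b)) x"
          unfolding comp_def Od_def Ev_def f2_def sb by (rule alg5[OF nsm ww2])
      qed
    finally show ?thesis .
  qed
  have c2: "Mf n m (Ev (int (Suc b))) \<in> carrier AG" using ev sig2_car G.nat_pow_closed by metis
  have "s2 [^]\<^bsub>AG\<^esub> (2*Suc b + 1) = s2 [^]\<^bsub>AG\<^esub> (2*Suc b) \<otimes>\<^bsub>AG\<^esub> s2" by simp
  also have "\<dots> = Mf n m (Ev (int (Suc b)) \<circ> f2)"
    unfolding ev unfolding sig2_eq by (rule Mf_mult[OF c2 _ cpt_Ev]) (use sig2_car sig2_eq in simp)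
  also have "\<dots> = Mf n m (Od (int (Suc b)))"
    by (rule Mf_cong) (unfold comp_def Od_def Ev_def f2_def, rule alg4[OF nsm])
  finally show ?case using ev by simp
qed

end



lemma alg7: "(n::int) = s*m \<Longrightarrow> 2*w = m+1 \<Longrightarrow> y = - (x + 1) + n*w*(x+1)*x \<Longrightarrow> z = - (y + 1) + n*w*(y+1)*y \<Longrightarrow>
  m*n dvd (z - x)"
  unfolding dvd_def by (rule exI[of _ "s*(-w*(w*x*(x+1))*(2*x+1) + n*w*(w*x*(x+1))*(w*x*(x+1)))"]) Groebner_Basis.algebra

lemma alg8: "(n::int) = s*m \<Longrightarrow> 2*w = m+1 \<Longrightarrow> A' = -a + n*w*a*(a-1) + m*n*t1 \<Longrightarrow> B' = -a + m*t2 \<Longrightarrow>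
  m*n dvd ((-(x+a) + n*w*(x+a)*(x+a-1)) - (-x - n*B'*x + n*w*x*(x-1) + A'))"
  unfolding dvd_def by (rule exI[of _ "a*x + t2*x - t1"]) Groebner_Basis.algebra

context cn begin

lemma NN_pos: "NN \<ge> 9"
proof -
  have h: "9 \<le> m * n" using mult_le_mono[OF m3 n3] by simp
  have "int (m * n) \<ge> 9" using h by linarith
  then show ?thesis by simp
qed

lemma s1_one_iff: "s1 [^]\<^bsub>AG\<^esub> a = \<one>\<^bsub>AG\<^esub> \<longleftrightarrow> m * n dvd a"
proof
  assume "s1 [^]\<^bsub>AG\<^esub> a = \<one>\<^bsub>AG\<^esub>"
  then have "Mf n m (\<lambda>x. x + int a) = Mf n m (\<lambda>x. x)" by (simp add: s1_pow one_Mf)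
  from Mf_eq_id[OF this cpt_shift, of 0] have "NN dvd int a" by simp
  then show "m * n dvd a" by (metis of_nat_dvd_iff of_nat_mult)
next
  assume "m * n dvd a"
  then have "NN dvd int a" by (metis of_nat_dvd_iff of_nat_mult)
  then have "Mf n m (\<lambda>x. x + int a) = Mf n m (\<lambda>x. x)" by (intro Mf_cong) simp
  then show "s1 [^]\<^bsub>AG\<^esub> a = \<one>\<^bsub>AG\<^esub>" by (simp add: s1_pow one_Mf)
qed

lemma ord_s1: "G.ord s1 = m * n"
  using G.ord_unique[OF sig1_car] s1_one_iff by blast

lemma s2_one_iff: "s2 [^]\<^bsub>AG\<^esub> k = \<one>\<^bsub>AG\<^esub> \<longleftrightarrow> 2 * m dvd k"
proof (cases "even k")
  case True
  then obtain b where k: "k = 2 * b" by blast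
  have "s2 [^]\<^bsub>AG\<^esub> k = \<one>\<^bsub>AG\<^esub> \<longleftrightarrow> m dvd b"
  proof
    assume "s2 [^]\<^bsub>AG\<^esub> k = \<one>\<^bsub>AG\<^esub>"
    then have "Mf n m (Ev (int b)) = Mf n m (\<lambda>x. x)" using s2_pow[of b] k by (simp add: one_Mf)
    from Mf_eq_id[OF this cpt_Ev, of 1] have "int m * int n dvd int n * int b" by (simp add: Ev_def)
    then have "int n * int m dvd int n * int b" by (simp add: mult.commute)
    then have "int m dvd int b" using n3 by simp
    then show "m dvd b" by simp
  next
    assume "m dvd b"
    then obtain t where t: "b = m * t" by blast
    have "Mf n m (Ev (int b)) = Mf n m (\<lambda>x. x)"
    proof (rule Mf_cong)
      fix x show "NN dvd Ev (int b) x - x" unfolding Ev_def t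
        by (simp add: dvd_def)
    qed
    then show "s2 [^]\<^bsub>AG\<^esub> k = \<one>\<^bsub>AG\<^esub>" using s2_pow[of b] k by (simp add: one_Mf)
  qed
  then show ?thesis using k by simp
next
  case False
  then obtain b where k: "k = 2 * b + 1" by (metis oddE)
  have "s2 [^]\<^bsub>AG\<^esub> k \<noteq> \<one>\<^bsub>AG\<^esub>"
  proof
    assume "s2 [^]\<^bsub>AG\<^esub> k = \<one>\<^bsub>AG\<^esub>"
    then have "Mf n m (Od (int b)) = Mf n m (\<lambda>x. x)" using s2_pow[of b, THEN conjunct2] k one_Mf by metis
    from Mf_eq_id[OF this cpt_Od, of 1] have "NN dvd (- 2 - int n * int b)" by (simp add: Od_def)
    then have "int n dvd (- 2 - int n * int b)" by (meson dvd_mult_right)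
    then have "int n dvd 2 + int n * int b"
      by (metis dvd_minus_iff minus_diff_eq diff_minus_eq_add add.commute uminus_add_conv_diff)
    then have "int n dvd 2" by (simp add: dvd_add_left_iff)
    then have "n dvd 2" by (metis of_nat_dvd_iff of_nat_numeral)
    then have "n \<le> 2" by (simp add: dvd_imp_le)
    then show False using n3 by simp
  qed
  moreover have "\<not> 2 * m dvd k" using False by (metis dvd_mult_left)
  ultimately show ?thesis by simp
qed

lemma ord_s2: "G.ord s2 = 2 * m"
  using G.ord_unique[OF sig2_car] s2_one_iff by blast

end



context cn begin

lemma cpt_comp: "cpt f \<Longrightarrow> cpt g \<Longrightarrow> cpt (f \<circ> g)" unfolding cpt_def by auto

lemma car1: "Mf n m (\<lambda>x. x + 1) \<in> carrier AG" using sig1_car sig1_eq by simp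
lemma car2: "Mf n m f2 \<in> carrier AG" using sig2_car sig2_eq by simp

lemma s21_eq: "s2 \<otimes>\<^bsub>AG\<^esub> s1 = Mf n m (f2 \<circ> (\<lambda>x. x + 1))"
  unfolding sig1_eq sig2_eq by (rule Mf_mult[OF car2 car1 cpt_f2])

lemma s21_car: "s2 \<otimes>\<^bsub>AG\<^esub> s1 \<in> carrier AG" using sig1_car sig2_car by simp

lemma s21_sq: "(s2 \<otimes>\<^bsub>AG\<^esub> s1) [^]\<^bsub>AG\<^esub> (2::nat) = \<one>\<^bsub>AG\<^esub>"
proof -
  have c: "Mf n m (f2 \<circ> (\<lambda>x. x + 1)) \<in> carrier AG" using s21_car s21_eq by simp
  have cp: "cpt (f2 \<circ> (\<lambda>x. x + 1))" by (rule cpt_comp[OF cpt_f2 cpt_shift])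
  have "(s2 \<otimes>\<^bsub>AG\<^esub> s1) [^]\<^bsub>AG\<^esub> (2::nat) = (s2 \<otimes>\<^bsub>AG\<^esub> s1) \<otimes>\<^bsub>AG\<^esub> (s2 \<otimes>\<^bsub>AG\<^esub> s1)"
    using s21_car by (simp add: numeral_2_eq_2)
  also have "\<dots> = Mf n m ((f2 \<circ> (\<lambda>x. x + 1)) \<circ> (f2 \<circ> (\<lambda>x. x + 1)))"
    unfolding s21_eq by (rule Mf_mult[OF c c cp])
  also have "\<dots> = Mf n m (\<lambda>x. x)"
  proof (rule Mf_cong)
    fix x
    define y where "y = f2 (x + 1)"
    define z where "z = f2 (y + 1)"
    have hy: "y = - (x + 1) + int n * ww * (x + 1) * x" unfolding y_def f2_def by simp
    have hz: "z = - (y + 1) + int n * ww * (y + 1) * y" unfolding z_def f2_def by simp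
    have "NN dvd z - x" by (rule alg7[OF nsm ww2 hy hz])
    then show "NN dvd ((f2 \<circ> (\<lambda>x. x + 1)) \<circ> (f2 \<circ> (\<lambda>x. x + 1))) x - x"
      unfolding z_def y_def by simp
  qed
  finally show ?thesis by (simp add: one_Mf)
qed

lemma s21_ne: "s2 \<otimes>\<^bsub>AG\<^esub> s1 \<noteq> \<one>\<^bsub>AG\<^esub>"
proof
  assume "s2 \<otimes>\<^bsub>AG\<^esub> s1 = \<one>\<^bsub>AG\<^esub>"
  then have "Mf n m (f2 \<circ> (\<lambda>x. x + 1)) = Mf n m (\<lambda>x. x)" by (simp add: s21_eq one_Mf)
  from Mf_eq_id[OF this cpt_comp[OF cpt_f2 cpt_shift], of 0] have "NN dvd -1" by (simp add: f2_def)
  then have "NN dvd 1" by simp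
  then show False using NN_pos zdvd_imp_le[of NN 1] by simp
qed

lemma ord_s21: "G.ord (s2 \<otimes>\<^bsub>AG\<^esub> s1) = 2"
proof -
  have d: "G.ord (s2 \<otimes>\<^bsub>AG\<^esub> s1) dvd 2" using G.pow_eq_id[OF s21_car] s21_sq by blast
  have "G.ord (s2 \<otimes>\<^bsub>AG\<^esub> s1) \<noteq> 1" using G.ord_eq_1[OF s21_car] s21_ne by blast
  moreover have "G.ord (s2 \<otimes>\<^bsub>AG\<^esub> s1) \<noteq> 0"
  proof
    assume "G.ord (s2 \<otimes>\<^bsub>AG\<^esub> s1) = 0"
    then show False using d by simp
  qed
  moreover have "G.ord (s2 \<otimes>\<^bsub>AG\<^esub> s1) \<le> 2" using d by (simp add: dvd_imp_le)
  ultimately show ?thesis by linarith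
qed

lemma s1pow_car: "s1 [^]\<^bsub>AG\<^esub> (a::nat) \<in> carrier AG" using sig1_car by simp
lemma s2pow_car: "s2 [^]\<^bsub>AG\<^esub> (a::nat) \<in> carrier AG" using sig2_car by simp

lemma s2_s1pow: "\<exists>(a'::nat) (b'::nat). s2 \<otimes>\<^bsub>AG\<^esub> s1 [^]\<^bsub>AG\<^esub> (a::nat) = s1 [^]\<^bsub>AG\<^esub> a' \<otimes>\<^bsub>AG\<^esub> s2 [^]\<^bsub>AG\<^esub> (2 * b' + 1)"
proof -
  define A0 where "A0 = - int a + int n * ww * int a * (int a - 1)"
  define a' where "a' = nat (A0 mod NN)"
  define b' where "b' = nat ((- int a) mod int m)"
  have NNp: "NN > 0" using NN_pos by simp
  have ha: "int a' = A0 + int m * int n * (- (A0 div NN))"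
    unfolding a'_def using NNp div_mult_mod_eq[of A0 NN] by (simp add: algebra_simps)
  have hb: "int b' = - int a + int m * (- ((- int a) div int m))"
    unfolding b'_def using m3 div_mult_mod_eq[of "- int a" "int m"] by (simp add: algebra_simps)
  have c1: "Mf n m (\<lambda>x. x + int a) \<in> carrier AG" using s1pow_car s1_pow by metis
  have c2: "Mf n m (\<lambda>x. x + int a') \<in> carrier AG" using s1pow_car s1_pow by metis
  have c3: "Mf n m (Od (int b')) \<in> carrier AG" using s2pow_car s2_pow by metis
  have "s2 \<otimes>\<^bsub>AG\<^esub> s1 [^]\<^bsub>AG\<^esub> a = Mf n m (f2 \<circ> (\<lambda>x. x + int a))"
    unfolding s1_pow sig2_eq by (rule Mf_mult[OF car2 c1 cpt_f2])
  also have "\<dots> = Mf n m ((\<lambda>x. x + int a') \<circ> Od (int b'))"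
  proof (rule Mf_cong)
    fix x
    show "NN dvd (f2 \<circ> (\<lambda>x. x + int a)) x - ((\<lambda>x. x + int a') \<circ> Od (int b')) x"
      unfolding comp_def f2_def Od_def
      by (rule alg8[OF nsm ww2 ha[unfolded A0_def] hb])
  qed
  also have "\<dots> = s1 [^]\<^bsub>AG\<^esub> a' \<otimes>\<^bsub>AG\<^esub> s2 [^]\<^bsub>AG\<^esub> (2 * b' + 1)"
    unfolding s1_pow s2_pow[THEN conjunct2] by (rule Mf_mult[OF c2 c3 cpt_shift, symmetric])
  finally show ?thesis by blast
qed

lemma s2pow_s1pow: "\<exists>(a'::nat) (k'::nat). s2 [^]\<^bsub>AG\<^esub> (k::nat) \<otimes>\<^bsub>AG\<^esub> s1 [^]\<^bsub>AG\<^esub> (a::nat) = s1 [^]\<^bsub>AG\<^esub> a' \<otimes>\<^bsub>AG\<^esub> s2 [^]\<^bsub>AG\<^esub> k'"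
proof (induction k arbitrary: a)
  case 0
  have "s2 [^]\<^bsub>AG\<^esub> (0::nat) \<otimes>\<^bsub>AG\<^esub> s1 [^]\<^bsub>AG\<^esub> a = s1 [^]\<^bsub>AG\<^esub> a \<otimes>\<^bsub>AG\<^esub> s2 [^]\<^bsub>AG\<^esub> (0::nat)"
    using s1pow_car by simp
  then show ?case by blast
next
  case (Suc k)
  obtain a1 k1 :: nat where 1: "s2 [^]\<^bsub>AG\<^esub> k \<otimes>\<^bsub>AG\<^esub> s1 [^]\<^bsub>AG\<^esub> a = s1 [^]\<^bsub>AG\<^esub> a1 \<otimes>\<^bsub>AG\<^esub> s2 [^]\<^bsub>AG\<^esub> k1"
    using Suc.IH by blast
  obtain a2 b2 :: nat where 2: "s2 \<otimes>\<^bsub>AG\<^esub> s1 [^]\<^bsub>AG\<^esub> a1 = s1 [^]\<^bsub>AG\<^esub> a2 \<otimes>\<^bsub>AG\<^esub> s2 [^]\<^bsub>AG\<^esub> (2 * b2 + 1)"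
    using s2_s1pow by blast
  have "s2 [^]\<^bsub>AG\<^esub> Suc k \<otimes>\<^bsub>AG\<^esub> s1 [^]\<^bsub>AG\<^esub> a = s2 \<otimes>\<^bsub>AG\<^esub> (s2 [^]\<^bsub>AG\<^esub> k \<otimes>\<^bsub>AG\<^esub> s1 [^]\<^bsub>AG\<^esub> a)"
    using G.nat_pow_Suc2[OF sig2_car] sig2_car s1pow_car s2pow_car by (simp add: G.m_assoc)
  also have "\<dots> = (s2 \<otimes>\<^bsub>AG\<^esub> s1 [^]\<^bsub>AG\<^esub> a1) \<otimes>\<^bsub>AG\<^esub> s2 [^]\<^bsub>AG\<^esub> k1"
    unfolding 1 using sig2_car s1pow_car s2pow_car by (simp add: G.m_assoc)
  also have "\<dots> = s1 [^]\<^bsub>AG\<^esub> a2 \<otimes>\<^bsub>AG\<^esub> s2 [^]\<^bsub>AG\<^esub> (2 * b2 + 1 + k1)"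
    unfolding 2 by (simp only: G.m_assoc[OF s1pow_car s2pow_car s2pow_car] G.nat_pow_mult[OF sig2_car])
  finally show ?case by blast
qed

end



context cn begin

definition "HH = {x. \<exists>(a::nat) (k::nat). x = s1 [^]\<^bsub>AG\<^esub> a \<otimes>\<^bsub>AG\<^esub> s2 [^]\<^bsub>AG\<^esub> k}"

lemma HH_car: "HH \<subseteq> carrier AG" using s1pow_car s2pow_car by (auto simp: HH_def)

lemma pow_inv: assumes "x \<in> carrier AG" "x [^]\<^bsub>AG\<^esub> (q::nat) = \<one>\<^bsub>AG\<^esub>" "q \<ge> 1"
  shows "inv\<^bsub>AG\<^esub> (x [^]\<^bsub>AG\<^esub> (a::nat)) = x [^]\<^bsub>AG\<^esub> (a * (q - 1))"
proof (rule G.inv_equality)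
  have "x [^]\<^bsub>AG\<^esub> (a * (q - 1)) \<otimes>\<^bsub>AG\<^esub> x [^]\<^bsub>AG\<^esub> a = x [^]\<^bsub>AG\<^esub> (a * (q - 1) + a)"
    by (rule G.nat_pow_mult[OF assms(1)])
  also have "a * (q - 1) + a = q * a" using assms(3)
    by (metis add.commute le_add_diff_inverse mult.commute mult_Suc_right plus_1_eq_Suc)
  also have "x [^]\<^bsub>AG\<^esub> (q * a) = \<one>\<^bsub>AG\<^esub>" using G.nat_pow_pow[OF assms(1), symmetric] assms(2) by simp
  finally show "x [^]\<^bsub>AG\<^esub> (a * (q - 1)) \<otimes>\<^bsub>AG\<^esub> x [^]\<^bsub>AG\<^esub> a = \<one>\<^bsub>AG\<^esub>" .
qed (use assms in auto)

lemma s1_N: "s1 [^]\<^bsub>AG\<^esub> (m * n) = \<one>\<^bsub>AG\<^esub>" using s1_one_iff by simp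
lemma s2_N: "s2 [^]\<^bsub>AG\<^esub> (2 * m) = \<one>\<^bsub>AG\<^esub>" using s2_one_iff by simp

lemma HH_sub: "subgroup HH AG"
proof (rule G.subgroupI[OF HH_car])
  have "\<one>\<^bsub>AG\<^esub> = s1 [^]\<^bsub>AG\<^esub> (0::nat) \<otimes>\<^bsub>AG\<^esub> s2 [^]\<^bsub>AG\<^esub> (0::nat)" by simp
  then show "HH \<noteq> {}" unfolding HH_def by blast
next
  fix x assume "x \<in> HH"
  then obtain a k :: nat where x: "x = s1 [^]\<^bsub>AG\<^esub> a \<otimes>\<^bsub>AG\<^esub> s2 [^]\<^bsub>AG\<^esub> k" unfolding HH_def by blast
  have mn1: "m * n \<ge> 1" using m3 n3 by (simp add: Suc_le_eq)
  have m1: "2 * m \<ge> 1" using m3 by simp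
  have "inv\<^bsub>AG\<^esub> x = inv\<^bsub>AG\<^esub> (s2 [^]\<^bsub>AG\<^esub> k) \<otimes>\<^bsub>AG\<^esub> inv\<^bsub>AG\<^esub> (s1 [^]\<^bsub>AG\<^esub> a)"
    unfolding x by (rule G.inv_mult_group[OF s1pow_car s2pow_car])
  also have "\<dots> = s2 [^]\<^bsub>AG\<^esub> (k * (2 * m - 1)) \<otimes>\<^bsub>AG\<^esub> s1 [^]\<^bsub>AG\<^esub> (a * (m * n - 1))"
    using pow_inv[OF sig2_car s2_N m1] pow_inv[OF sig1_car s1_N mn1] by simp
  finally show "inv\<^bsub>AG\<^esub> x \<in> HH" unfolding HH_def using s2pow_s1pow by auto
next
  fix x y assume "x \<in> HH" "y \<in> HH"
  then obtain a k c d :: nat where x: "x = s1 [^]\<^bsub>AG\<^esub> a \<otimes>\<^bsub>AG\<^esub> s2 [^]\<^bsub>AG\<^esub> k"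
    and y: "y = s1 [^]\<^bsub>AG\<^esub> c \<otimes>\<^bsub>AG\<^esub> s2 [^]\<^bsub>AG\<^esub> d" unfolding HH_def by blast
  obtain a' k' :: nat where e: "s2 [^]\<^bsub>AG\<^esub> k \<otimes>\<^bsub>AG\<^esub> s1 [^]\<^bsub>AG\<^esub> c = s1 [^]\<^bsub>AG\<^esub> a' \<otimes>\<^bsub>AG\<^esub> s2 [^]\<^bsub>AG\<^esub> k'"
    using s2pow_s1pow by blast
  have "x \<otimes>\<^bsub>AG\<^esub> y = s1 [^]\<^bsub>AG\<^esub> a \<otimes>\<^bsub>AG\<^esub> (s2 [^]\<^bsub>AG\<^esub> k \<otimes>\<^bsub>AG\<^esub> s1 [^]\<^bsub>AG\<^esub> c) \<otimes>\<^bsub>AG\<^esub> s2 [^]\<^bsub>AG\<^esub> d"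
    unfolding x y using s1pow_car s2pow_car by (simp add: G.m_assoc)
  also have "\<dots> = (s1 [^]\<^bsub>AG\<^esub> a \<otimes>\<^bsub>AG\<^esub> s1 [^]\<^bsub>AG\<^esub> a') \<otimes>\<^bsub>AG\<^esub> (s2 [^]\<^bsub>AG\<^esub> k' \<otimes>\<^bsub>AG\<^esub> s2 [^]\<^bsub>AG\<^esub> d)"
    unfolding e using s1pow_car s2pow_car by (simp add: G.m_assoc)
  also have "\<dots> = s1 [^]\<^bsub>AG\<^esub> (a + a') \<otimes>\<^bsub>AG\<^esub> s2 [^]\<^bsub>AG\<^esub> (k' + d)"
    by (simp only: G.nat_pow_mult[OF sig1_car] G.nat_pow_mult[OF sig2_car])
  finally show "x \<otimes>\<^bsub>AG\<^esub> y \<in> HH" unfolding HH_def by blast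
qed

lemma sub_pow: "subgroup K AG \<Longrightarrow> y \<in> K \<Longrightarrow> y [^]\<^bsub>AG\<^esub> (a::nat) \<in> K"
proof (induction a)
  case 0 then show ?case by (simp add: subgroup.one_closed)
next
  case (Suc a)
  then have "y \<in> carrier AG" by (meson subgroup.mem_carrier)
  then show ?case using Suc by (simp add: subgroup.m_closed)
qed

lemma gen_eq: "generate AG {s1, s2} = HH"
proof
  have "s1 = s1 [^]\<^bsub>AG\<^esub> (1::nat) \<otimes>\<^bsub>AG\<^esub> s2 [^]\<^bsub>AG\<^esub> (0::nat)" using sig1_car by simp
  moreover have "s2 = s1 [^]\<^bsub>AG\<^esub> (0::nat) \<otimes>\<^bsub>AG\<^esub> s2 [^]\<^bsub>AG\<^esub> (1::nat)" using sig2_car by simp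
  ultimately have "{s1, s2} \<subseteq> HH" unfolding HH_def by blast
  then show "generate AG {s1, s2} \<subseteq> HH" by (rule G.generate_subgroup_incl[OF _ HH_sub])
next
  have sub: "subgroup (generate AG {s1, s2}) AG" using sig1_car sig2_car by (intro G.generate_is_subgroup) auto
  have i1: "s1 \<in> generate AG {s1, s2}" by (auto intro: generate.incl)
  have i2: "s2 \<in> generate AG {s1, s2}" by (auto intro: generate.incl)
  show "HH \<subseteq> generate AG {s1, s2}"
    unfolding HH_def using sub_pow[OF sub i1] sub_pow[OF sub i2] subgroup.m_closed[OF sub] by blast
qed

lemma pow_mod: assumes "x \<in> carrier AG" "x [^]\<^bsub>AG\<^esub> (q::nat) = \<one>\<^bsub>AG\<^esub>"
  shows "x [^]\<^bsub>AG\<^esub> (a::nat) = x [^]\<^bsub>AG\<^esub> (a mod q)"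
proof -
  have "x [^]\<^bsub>AG\<^esub> a = x [^]\<^bsub>AG\<^esub> (a mod q + q * (a div q))" by simp
  also have "\<dots> = x [^]\<^bsub>AG\<^esub> (a mod q) \<otimes>\<^bsub>AG\<^esub> x [^]\<^bsub>AG\<^esub> (q * (a div q))"
    by (rule G.nat_pow_mult[OF assms(1), symmetric])
  also have "x [^]\<^bsub>AG\<^esub> (q * (a div q)) = \<one>\<^bsub>AG\<^esub>" using G.nat_pow_pow[OF assms(1), symmetric] assms(2) by simp
  finally show ?thesis using assms(1) by simp
qed

lemma prod_apply: "x \<in> carrier AG \<Longrightarrow> y \<in> carrier AG \<Longrightarrow> v \<in> S \<Longrightarrow> (x \<otimes>\<^bsub>AG\<^esub> y) v = x (y v)"
  by (simp add: Aut_mult compose_def)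

lemma s2pow_dec0: "(s2 [^]\<^bsub>AG\<^esub> (k::nat)) (dec n m 0) = dec n m 0"
proof (cases "even k")
  case True
  then obtain b where "k = 2 * b" by blast
  then show ?thesis using s2_pow[of b] Mf_dec[OF cpt_Ev, of "int b" 0] by (simp add: Ev_def)
next
  case False
  then obtain b where "k = 2 * b + 1" by (metis oddE)
  then show ?thesis using s2_pow[of b, THEN conjunct2] Mf_dec[OF cpt_Od, of "int b" 0] by (simp add: Od_def)
qed

lemma s1pow_dec0: "(s1 [^]\<^bsub>AG\<^esub> (a::nat)) (dec n m 0) = dec n m (int a)"
  using Mf_dec[OF cpt_shift, of "int a" 0] by (simp add: s1_pow)

lemma s2_pow_inj: assumes "k < 2 * m" "k' < 2 * m" "s2 [^]\<^bsub>AG\<^esub> (k::nat) = s2 [^]\<^bsub>AG\<^esub> (k'::nat)"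
  shows "k = k'"
proof -
  have *: "k1 = k2" if "k1 \<le> k2" "k2 < 2 * m" "s2 [^]\<^bsub>AG\<^esub> (k1::nat) = s2 [^]\<^bsub>AG\<^esub> (k2::nat)" for k1 k2
  proof -
    have "s2 [^]\<^bsub>AG\<^esub> k1 \<otimes>\<^bsub>AG\<^esub> s2 [^]\<^bsub>AG\<^esub> (k2 - k1) = s2 [^]\<^bsub>AG\<^esub> k1 \<otimes>\<^bsub>AG\<^esub> \<one>\<^bsub>AG\<^esub>"
      using G.nat_pow_mult[OF sig2_car, of k1 "k2 - k1"] that s2pow_car by simp
    then have "s2 [^]\<^bsub>AG\<^esub> (k2 - k1) = \<one>\<^bsub>AG\<^esub>"
      using G.Units_l_cancel[of "s2 [^]\<^bsub>AG\<^esub> k1"] G.Units_eq s2pow_car by simp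
    then have "2 * m dvd k2 - k1" using s2_one_iff by simp
    then have "k2 - k1 = 0" using that by (metis dvd_imp_le le_less_trans diff_le_self not_less neq0_conv)
    then show ?thesis using that by simp
  qed
  show ?thesis using *[of k k'] *[of k' k] assms by (cases "k \<le> k'") auto
qed

lemma HH_img: "HH = (\<lambda>(a, k). s1 [^]\<^bsub>AG\<^esub> a \<otimes>\<^bsub>AG\<^esub> s2 [^]\<^bsub>AG\<^esub> k) ` ({..<m * n} \<times> {..<2 * m})"
proof
  show "HH \<subseteq> (\<lambda>(a, k). s1 [^]\<^bsub>AG\<^esub> a \<otimes>\<^bsub>AG\<^esub> s2 [^]\<^bsub>AG\<^esub> k) ` ({..<m * n} \<times> {..<2 * m})"
  proof
    fix x assume "x \<in> HH"
    then obtain a k :: nat where x: "x = s1 [^]\<^bsub>AG\<^esub> a \<otimes>\<^bsub>AG\<^esub> s2 [^]\<^bsub>AG\<^esub> k" unfolding HH_def by blast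
    have "x = s1 [^]\<^bsub>AG\<^esub> (a mod (m * n)) \<otimes>\<^bsub>AG\<^esub> s2 [^]\<^bsub>AG\<^esub> (k mod (2 * m))"
      unfolding x using pow_mod[OF sig1_car s1_N] pow_mod[OF sig2_car s2_N] by metis
    moreover have "(a mod (m * n), k mod (2 * m)) \<in> {..<m * n} \<times> {..<2 * m}"
      using m3 n3 by simp
    ultimately show "x \<in> (\<lambda>(a, k). s1 [^]\<^bsub>AG\<^esub> a \<otimes>\<^bsub>AG\<^esub> s2 [^]\<^bsub>AG\<^esub> k) ` ({..<m * n} \<times> {..<2 * m})"
      by (metis (no_types, lifting) case_prod_conv image_eqI)
  qed
qed (auto simp: HH_def)

lemma HH_inj: "inj_on (\<lambda>(a, k). s1 [^]\<^bsub>AG\<^esub> a \<otimes>\<^bsub>AG\<^esub> s2 [^]\<^bsub>AG\<^esub> k) ({..<m * n} \<times> {..<2 * m})"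
proof (rule inj_onI, clarify)
  fix a k a' k' :: nat
  assume a: "a < m * n" "k < 2 * m" "a' < m * n" "k' < 2 * m"
    and e: "s1 [^]\<^bsub>AG\<^esub> a \<otimes>\<^bsub>AG\<^esub> s2 [^]\<^bsub>AG\<^esub> k = s1 [^]\<^bsub>AG\<^esub> a' \<otimes>\<^bsub>AG\<^esub> s2 [^]\<^bsub>AG\<^esub> k'"
  have d0: "dec n m 0 \<in> S" by (rule dec_in)
  have "(s1 [^]\<^bsub>AG\<^esub> a \<otimes>\<^bsub>AG\<^esub> s2 [^]\<^bsub>AG\<^esub> k) (dec n m 0) = dec n m (int a)"
    using prod_apply[OF s1pow_car s2pow_car d0] s2pow_dec0 s1pow_dec0 by simp
  moreover have "(s1 [^]\<^bsub>AG\<^esub> a' \<otimes>\<^bsub>AG\<^esub> s2 [^]\<^bsub>AG\<^esub> k') (dec n m 0) = dec n m (int a')"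
    using prod_apply[OF s1pow_car s2pow_car d0] s2pow_dec0 s1pow_dec0 by simp
  ultimately have "dec n m (int a) = dec n m (int a')" using e by simp
  then have dv: "NN dvd int a - int a'" using dec_eq_iff by simp
  have aa: "a = a'"
  proof (rule ccontr)
    assume "a \<noteq> a'"
    then have "\<bar>NN\<bar> \<le> \<bar>int a - int a'\<bar>" using dvd_imp_le_int[OF _ dv] by simp
    moreover have "\<bar>int a - int a'\<bar> < int m * int n" using a by (simp add: abs_if flip: of_nat_mult)
    ultimately show False by simp
  qed
  then have "s2 [^]\<^bsub>AG\<^esub> k = s2 [^]\<^bsub>AG\<^esub> k'"
    using e G.Units_l_cancel[of "s1 [^]\<^bsub>AG\<^esub> a"] G.Units_eq s1pow_car s2pow_car by simp
  then have "k = k'" using s2_pow_inj a by blast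
  then show "a = a' \<and> k = k'" using aa by simp
qed

lemma card_gen: "card (generate AG {s1, s2}) = 2 * m ^ 2 * n"
proof -
  have "card (generate AG {s1, s2}) = card ({..<m * n} \<times> {..<2 * m})"
    unfolding gen_eq HH_img by (rule card_image[OF HH_inj])
  also have "\<dots> = 2 * m ^ 2 * n" by (simp add: power2_eq_square)
  finally show ?thesis .
qed

end

theorem lemma4p1:
  fixes m s n :: nat
  assumes "m \<ge> 3" and "odd m" and "s > 0" and "n = s * m"
  shows "group.ord (Aut n m) (sigma1 n m) = m * n \<and>
         group.ord (Aut n m) (sigma2 n m) = 2 * m \<and>
         group.ord (Aut n m) (sigma2 n m \<otimes>\<^bsub>Aut n m\<^esub> sigma1 n m) = 2 \<and>
         card (generate (Aut n m) {sigma1 n m, sigma2 n m}) = 2 * m ^ 2 * n"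
proof -
  interpret cn m s n using assms by unfold_locales auto
  show ?thesis using ord_s1 ord_s2 ord_s21 card_gen by blast
qed


end
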